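(* Let $(\Omega,\mathcal A)$ be a measurable space and let $K$ be a random compact set in $\mathbb C^n$. Then its rationally convex hull, defined by $\omega\mapsto\mathcal R\text{-hull}\,(K(\omega))$, is a random compact set.
   Context: A random compact set is a measurable map from $\Omega$ to the space $\mathcal K'(\mathbb C^n)$ of non-empty compact subsets of $\mathbb C^n$ with the Hausdorff distance and its Borel $\sigma$-algebra. For compact $L$, $\mathcal R\text{-hull}\,L=\{z\in\mathbb C^n:|r(z)|\le\max_{x\in L}|r(x)| \text{ for all rational functions } r \text{ on } \mathbb C^n \text{ analytic (without singularities) on } L\}$. *)

theory Defs
  imports "HOL-Analysis.Analysis"
begin

definition hausdorff_dist :: "'a::metric_space set \<Rightarrow> 'a set \<Rightarrow> real" where
  "hausdorff_dist S T =
     max (SUP x\<in>S. infdist x T) (SUP y\<in>T. infdist y S)"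

definition nonempty_compacts :: "'a::metric_space set set" where
  "nonempty_compacts = {S. compact S \<and> S \<noteq> {}}"

definition hausdorff_open :: "'a::metric_space set set \<Rightarrow> bool" where
  "hausdorff_open U \<longleftrightarrow> U \<subseteq> nonempty_compacts \<and>
     (\<forall>S\<in>U. \<exists>e>0. \<forall>T\<in>nonempty_compacts. hausdorff_dist S T < e \<longrightarrow> T \<in> U)"

definition hausdorff_borel :: "'a::metric_space set measure" where
  "hausdorff_borel = sigma nonempty_compacts {U. hausdorff_open U}"

definition cpoly :: "(complex ^ 'n \<Rightarrow> complex) \<Rightarrow> bool" where
  "cpoly f \<longleftrightarrow> (\<exists>(A :: ('n \<Rightarrow> nat) set) (c :: ('n \<Rightarrow> nat) \<Rightarrow> complex). finite A \<and>
      f = (\<lambda>z. \<Sum>\<alpha>\<in>A. c \<alpha> * (\<Prod>i\<in>UNIV. (z $ i) ^ (\<alpha> i))))"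

text \<open>Rationally convex hull. A rational function analytic on L is p/q with
  polynomials p, q and q without zeros on L; at z it must be defined (q z \<noteq> 0).\<close>
definition R_hull :: "(complex ^ 'n) set \<Rightarrow> (complex ^ 'n) set" where
  "R_hull L = {z. \<forall>p q. cpoly p \<and> cpoly q \<and> (\<forall>x\<in>L. q x \<noteq> 0) \<longrightarrow>
      q z \<noteq> 0 \<and> norm (p z / q z) \<le> (SUP x\<in>L. norm (p x / q x))}"

end

theory Submission imports Defs "HOL-Analysis.Analysis" begin


lemma infdist_bdd:
  fixes S T :: "'a::heine_borel set"
  assumes "compact S"
  shows "bdd_above ((\<lambda>x. infdist x T) ` S)"
proof -
  have "compact ((\<lambda>x. infdist x T) ` S)"
    by (intro compact_continuous_image continuous_on_infdist continuous_on_id assms)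
  then show ?thesis by (simp add: bounded_imp_bdd_above compact_imp_bounded)
qed

lemma infdist_sup_attained:
  fixes S T :: "'a::heine_borel set"
  assumes "compact S" "S \<noteq> {}"
  shows "\<exists>x\<in>S. (SUP y\<in>S. infdist y T) = infdist x T"
proof -
  obtain x where x: "x\<in>S" "\<forall>y\<in>S. infdist y T \<le> infdist x T"
    using continuous_attains_sup[OF assms, of "\<lambda>y. infdist y T"]
      continuous_on_infdist[OF continuous_on_id, of S T] by auto
  have "(SUP y\<in>S. infdist y T) = infdist x T"
  proof (rule antisym)
    show "(SUP y\<in>S. infdist y T) \<le> infdist x T"
      by (rule cSUP_least) (use assms x in auto)
    show "infdist x T \<le> (SUP y\<in>S. infdist y T)"
      by (rule cSUP_upper[OF x(1) infdist_bdd[OF assms(1)]])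
  qed
  then show ?thesis using x by blast
qed

lemma hd_le_iff:
  fixes S T :: "'a::heine_borel set"
  assumes "S \<in> nonempty_compacts" "T \<in> nonempty_compacts"
  shows "hausdorff_dist S T \<le> e \<longleftrightarrow> (\<forall>x\<in>S. infdist x T \<le> e) \<and> (\<forall>y\<in>T. infdist y S \<le> e)"
  using assms infdist_bdd[of S T] infdist_bdd[of T S]
  by (simp add: hausdorff_dist_def nonempty_compacts_def cSUP_le_iff)

lemma hd_less_iff:
  fixes S T :: "'a::heine_borel set"
  assumes "S \<in> nonempty_compacts" "T \<in> nonempty_compacts"
  shows "hausdorff_dist S T < e \<longleftrightarrow> (\<forall>x\<in>S. infdist x T < e) \<and> (\<forall>y\<in>T. infdist y S < e)"
proof -
  obtain x where x: "x\<in>S" "(SUP y\<in>S. infdist y T) = infdist x T"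
    using infdist_sup_attained[of S T] assms by (auto simp: nonempty_compacts_def)
  obtain y where y: "y\<in>T" "(SUP x\<in>T. infdist x S) = infdist y S"
    using infdist_sup_attained[of T S] assms by (auto simp: nonempty_compacts_def)
  have a: "\<forall>x'\<in>S. infdist x' T \<le> infdist x T"
    using x assms infdist_bdd[of S T] cSUP_upper[of _ S "\<lambda>x. infdist x T"]
    by (auto simp: nonempty_compacts_def)
  have b: "\<forall>x'\<in>T. infdist x' S \<le> infdist y S"
    using y assms infdist_bdd[of T S] cSUP_upper[of _ T "\<lambda>x. infdist x S"]
    by (auto simp: nonempty_compacts_def)
  show ?thesis unfolding hausdorff_dist_def x y using a b x y
    by (auto simp: max_less_iff_conj)
qed

lemma hd_sym: "hausdorff_dist S T = hausdorff_dist T S"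
  by (simp add: hausdorff_dist_def max.commute)

lemma hd_nonneg:
  fixes S T :: "'a::heine_borel set"
  assumes "S \<in> nonempty_compacts" "T \<in> nonempty_compacts"
  shows "0 \<le> hausdorff_dist S T"
proof -
  obtain x where "x \<in> S" using assms by (auto simp: nonempty_compacts_def)
  then have "infdist x T \<le> hausdorff_dist S T"
    using hd_le_iff[OF assms, of "hausdorff_dist S T"] by auto
  then show ?thesis using infdist_nonneg[of x T] by linarith
qed

lemma infdist_via:
  fixes T U :: "'a::heine_borel set"
  assumes "T \<in> nonempty_compacts" "U \<in> nonempty_compacts"
  shows "infdist x U \<le> infdist x T + hausdorff_dist T U"
proof -
  obtain t where t: "t \<in> T" "infdist x T = dist x t"
    using infdist_attains_inf[of T x] assms by (auto simp: nonempty_compacts_def compact_imp_closed)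
  have "infdist t U \<le> hausdorff_dist T U"
    using hd_le_iff[OF assms, of "hausdorff_dist T U"] t by auto
  moreover have "infdist x U \<le> infdist t U + dist x t" by (rule infdist_triangle)
  ultimately show ?thesis using t by linarith
qed

lemma hd_triangle:
  fixes S T U :: "'a::heine_borel set"
  assumes "S \<in> nonempty_compacts" "T \<in> nonempty_compacts" "U \<in> nonempty_compacts"
  shows "hausdorff_dist S U \<le> hausdorff_dist S T + hausdorff_dist T U"
proof -
  have 1: "\<forall>x\<in>S. infdist x T \<le> hausdorff_dist S T"
    using hd_le_iff[OF assms(1,2)] by blast
  have 2: "\<forall>y\<in>U. infdist y T \<le> hausdorff_dist T U"
    using hd_le_iff[OF assms(2,3)] by blast
  show ?thesis
    unfolding hd_le_iff[OF assms(1,3)]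
  proof safe
    fix x assume "x \<in> S"
    then show "infdist x U \<le> hausdorff_dist S T + hausdorff_dist T U"
      using infdist_via[OF assms(2,3), of x] 1 by fastforce
  next
    fix y assume "y \<in> U"
    then show "infdist y S \<le> hausdorff_dist S T + hausdorff_dist T U"
      using infdist_via[OF assms(2,1), of y] 2 hd_sym[of T S] by fastforce
  qed
qed



definition up :: "'a::metric_space set \<Rightarrow> 'a set set" where
  "up U = {C \<in> nonempty_compacts. C \<subseteq> U}"

definition Gup :: "'a::metric_space set set set" where
  "Gup = {up U | U. open U}"

abbreviation SS :: "'a::metric_space set set set" where
  "SS \<equiv> sigma_sets nonempty_compacts Gup"

lemma Gup_Pow: "Gup \<subseteq> Pow nonempty_compacts"
  by (auto simp: Gup_def up_def)

lemma SS_alg: "sigma_algebra nonempty_compacts SS"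
  by (rule sigma_algebra_sigma_sets[OF Gup_Pow])

lemma SS_hit_closed:
  assumes "closed F"
  shows "{C \<in> nonempty_compacts. C \<inter> F \<noteq> {}} \<in> SS"
proof -
  have "up (- F) \<in> SS" using assms by (auto simp: Gup_def intro!: sigma_sets.Basic)
  then have "nonempty_compacts - up (- F) \<in> SS" by (rule sigma_sets.Compl)
  moreover have "nonempty_compacts - up (- F) = {C \<in> nonempty_compacts. C \<inter> F \<noteq> {}}"
    by (auto simp: up_def)
  ultimately show ?thesis by simp
qed

lemma SS_hit_ball:
  "{C \<in> nonempty_compacts. C \<inter> ball x r \<noteq> {}} \<in> SS"
proof -
  have eq: "{C \<in> nonempty_compacts. C \<inter> ball x r \<noteq> {}} =
     (\<Union>n. {C \<in> nonempty_compacts. C \<inter> cball x (r - inverse (real (Suc n))) \<noteq> {}})"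
  proof (intro equalityI subsetI)
    fix C assume "C \<in> {C \<in> nonempty_compacts. C \<inter> ball x r \<noteq> {}}"
    then obtain y where y: "C \<in> nonempty_compacts" "y \<in> C" "dist x y < r" by auto
    obtain n where n: "n > 0" "inverse (real n) < r - dist x y"
      using ex_inverse_of_nat_less[of "r - dist x y"] y by auto
    then obtain m where "n = Suc m" using gr0_implies_Suc by blast
    then have "y \<in> C \<inter> cball x (r - inverse (real (Suc m)))" using n y by auto
    then show "C \<in> (\<Union>n. {C \<in> nonempty_compacts. C \<inter> cball x (r - inverse (real (Suc n))) \<noteq> {}})"
      using y by blast
  next
    fix C assume "C \<in> (\<Union>n. {C \<in> nonempty_compacts. C \<inter> cball x (r - inverse (real (Suc n))) \<noteq> {}})"
    then obtain n y where y: "C \<in> nonempty_compacts" "y \<in> C" "dist x y \<le> r - inverse (real (Suc n))"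
      by auto
    have "inverse (real (Suc n)) > 0" by simp
    then have "dist x y < r" using y(3) by linarith
    then have "y \<in> C \<inter> ball x r" using y by auto
    then show "C \<in> {C \<in> nonempty_compacts. C \<inter> ball x r \<noteq> {}}" using y by auto
  qed
  show ?thesis unfolding eq
    by (intro sigma_sets.Union SS_hit_closed) auto
qed

lemma compact_infdist_lt:
  fixes T :: "'a::heine_borel set"
  assumes "T \<in> nonempty_compacts"
  shows "infdist x T < r \<longleftrightarrow> T \<inter> ball x r \<noteq> {}"
proof
  assume "infdist x T < r"
  moreover obtain t where "t \<in> T" "infdist x T = dist x t"
    using infdist_attains_inf[of T x] assms by (auto simp: nonempty_compacts_def compact_imp_closed)
  ultimately show "T \<inter> ball x r \<noteq> {}" by auto
next
  assume "T \<inter> ball x r \<noteq> {}"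
  then obtain t where "t \<in> T" "dist x t < r" by auto
  then show "infdist x T < r" using infdist_le[of t T x] by linarith
qed

lemma SS_hball:
  fixes D :: "'a::heine_borel set"
  assumes "D \<in> nonempty_compacts" "finite D"
  shows "{T \<in> nonempty_compacts. hausdorff_dist D T < r} \<in> SS"
proof -
  interpret SA: sigma_algebra nonempty_compacts SS by (rule SS_alg)
  have op: "open {y. infdist y D < r}"
    by (rule open_Collect_less) (auto intro: continuous_on_infdist continuous_on_id)
  have eq: "{T \<in> nonempty_compacts. hausdorff_dist D T < r} =
     up {y. infdist y D < r} \<inter> (\<Inter>x\<in>D. {C \<in> nonempty_compacts. C \<inter> ball x r \<noteq> {}})"
    using assms(1) by (auto simp: hd_less_iff up_def compact_infdist_lt)
  have "up {y. infdist y D < r} \<in> SS" using op by (auto simp: Gup_def intro!: sigma_sets.Basic)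
  moreover have "(\<Inter>x\<in>D. {C \<in> nonempty_compacts. C \<inter> ball x r \<noteq> {}}) \<in> SS"
    using assms SS_hit_ball
    by (intro SA.finite_INT) (auto simp: nonempty_compacts_def)
  ultimately show ?thesis unfolding eq by (rule SA.Int)
qed

lemma finite_approx:
  fixes S :: "'a::euclidean_space set"
  assumes S: "S \<in> nonempty_compacts" and e: "e > 0"
    and Dn: "\<And>X. open X \<Longrightarrow> X \<noteq> {} \<Longrightarrow> \<exists>d\<in>Dn. d \<in> X"
  shows "\<exists>D. finite D \<and> D \<noteq> {} \<and> D \<subseteq> Dn \<and> hausdorff_dist S D < e"
proof -
  have "S \<subseteq> (\<Union>x\<in>S. ball x (e/2))" using e by auto
  then obtain X where X: "X \<subseteq> S" "finite X" "S \<subseteq> (\<Union>x\<in>X. ball x (e/2))"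
    using compactE_image[of S S "\<lambda>x. ball x (e/2)"] S by (auto simp: nonempty_compacts_def)
  have "\<forall>x\<in>X. \<exists>d\<in>Dn. d \<in> ball x (e/2)"
  proof
    fix x assume "x \<in> X"
    have "x \<in> ball x (e/2)" using e by simp
    then show "\<exists>d\<in>Dn. d \<in> ball x (e/2)" using Dn[of "ball x (e/2)"] by blast
  qed
  then obtain d where d: "\<forall>x\<in>X. d x \<in> Dn \<and> d x \<in> ball x (e/2)" by metis
  have Xne: "X \<noteq> {}" using X S by (auto simp: nonempty_compacts_def)
  define D where "D = d ` X"
  have DNC: "D \<in> nonempty_compacts" using X Xne by (auto simp: D_def nonempty_compacts_def intro: finite_imp_compact)
  have "hausdorff_dist S D < e"
    unfolding hd_less_iff[OF S DNC]
  proof safe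
    fix s assume "s \<in> S"
    then obtain x where x: "x \<in> X" "dist x s < e/2" using X by auto
    then have "dist s (d x) < e" using d dist_triangle[of s "d x" x] by (auto simp: dist_commute)
    moreover have "d x \<in> D" using x by (auto simp: D_def)
    ultimately show "infdist s D < e" using infdist_le[of "d x" D s] by linarith
  next
    fix y assume "y \<in> D"
    then obtain x where x: "x \<in> X" "y = d x" by (auto simp: D_def)
    then have "dist y x < e" using d e by (auto simp: dist_commute)
    then show "infdist y S < e" using infdist_le[of x S y] x X by force
  qed
  then show ?thesis using X Xne d by (auto simp: D_def)
qed

lemma SS_open:
  fixes V :: "'a::euclidean_space set set"
  assumes "hausdorff_open V"
  shows "V \<in> SS"
proof -
  obtain Dn :: "'a set" where Dn: "countable Dn" "\<And>X. open X \<Longrightarrow> X \<noteq> {} \<Longrightarrow> \<exists>d\<in>Dn. d \<in> X"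
    by (rule countable_dense_setE) blast
  define HB where "HB = (\<lambda>(D::'a set,r::real). {T \<in> nonempty_compacts. hausdorff_dist D T < r})"
  define I where "I = {(D,r). (finite D \<and> D \<subseteq> Dn) \<and> D \<noteq> {} \<and> r \<in> \<rat> \<and> HB (D,r) \<subseteq> V}"
  have cI: "countable I"
  proof (rule countable_subset)
    show "I \<subseteq> {D. finite D \<and> D \<subseteq> Dn} \<times> \<rat>" by (auto simp: I_def)
    show "countable ({D. finite D \<and> D \<subseteq> Dn} \<times> \<rat>)"
      using countable_Collect_finite_subset[OF Dn(1)] countable_rat by blast
  qed
  have eq: "V = (\<Union>i\<in>I. HB i)"
  proof (intro equalityI subsetI)
    fix S assume SV: "S \<in> V"
    then have S: "S \<in> nonempty_compacts" using assms by (auto simp: hausdorff_open_def)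
    obtain e where e: "e > 0" "\<forall>T\<in>nonempty_compacts. hausdorff_dist S T < e \<longrightarrow> T \<in> V"
      using assms SV by (auto simp: hausdorff_open_def)
    obtain D where D: "finite D" "D \<noteq> {}" "D \<subseteq> Dn" "hausdorff_dist S D < e/3"
      using finite_approx[OF S _ Dn(2), of "e/3"] e by auto
    have DNC: "D \<in> nonempty_compacts" using D by (auto simp: nonempty_compacts_def intro: finite_imp_compact)
    obtain r where r: "r \<in> \<rat>" "e/3 < r" "r < 2*e/3"
      using Rats_dense_in_real[of "e/3" "2*e/3"] e by auto
    have "HB (D,r) \<subseteq> V"
    proof
      fix T assume "T \<in> HB (D,r)"
      then have T: "T \<in> nonempty_compacts" "hausdorff_dist D T < r" by (auto simp: HB_def)
      have "hausdorff_dist S T < e"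
        using hd_triangle[OF S DNC T(1)] D(4) T(2) r by linarith
      then show "T \<in> V" using e T by auto
    qed
    moreover have "S \<in> HB (D,r)" using S D r hd_sym[of D S] by (auto simp: HB_def)
    ultimately show "S \<in> (\<Union>i\<in>I. HB i)" using D r by (auto simp: I_def)
  next
    fix S assume "S \<in> (\<Union>i\<in>I. HB i)"
    then show "S \<in> V" by (auto simp: I_def)
  qed
  have "HB ` I \<subseteq> SS"
  proof safe
    fix D r assume "(D,r) \<in> I"
    then have "finite D" "D \<noteq> {}" by (auto simp: I_def)
    moreover have "D \<in> nonempty_compacts" using calculation by (auto simp: nonempty_compacts_def intro: finite_imp_compact)
    ultimately show "HB (D,r) \<in> SS"
      unfolding HB_def using SS_hball by auto
  qed
  then show ?thesis unfolding eq
    by (intro sigma_algebra.countable_UN'[OF SS_alg cI])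
qed



lemma cpoly_cont:
  assumes "cpoly f"
  shows "continuous_on UNIV f"
proof -
  obtain A c where f: "f = (\<lambda>z. \<Sum>\<alpha>\<in>A. c \<alpha> * (\<Prod>i\<in>UNIV. (z $ i) ^ (\<alpha> i)))"
    using assms by (auto simp: cpoly_def)
  have ci: "continuous_on UNIV (\<lambda>z::complex^'a. z $ i)" for i
    by (rule linear_continuous_on) (rule bounded_linear_vec_nth)
  show ?thesis unfolding f
    by (intro continuous_on_sum continuous_on_mult continuous_on_const continuous_on_prod
        continuous_on_power ci)
qed

lemma cpoly_isCont: "cpoly f \<Longrightarrow> isCont f z"
  using cpoly_cont continuous_on_eq_continuous_at open_UNIV by blast

lemma cpoly_const: "cpoly (\<lambda>z::complex^'n. c)"
  unfolding cpoly_def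
  by (rule exI[of _ "{\<lambda>_. 0}"], rule exI[of _ "\<lambda>_. c"]) simp

lemma prod_pz:
  fixes z :: "complex^'n"
  shows "(\<Prod>j\<in>UNIV. (z $ j) ^ (if j = i then 1 else 0)) = z $ i"
proof -
  have "(\<Prod>j\<in>UNIV. (z $ j) ^ (if j = i then 1 else 0)) = (\<Prod>j\<in>UNIV. if j = i then z $ j else 1)"
    by (rule prod.cong) auto
  also have "\<dots> = z $ i" by (simp add: prod.delta)
  finally show ?thesis .
qed

lemma cpoly_comp: "cpoly (\<lambda>z::complex^'n. z $ i)"
  unfolding cpoly_def
  by (rule exI[of _ "{\<lambda>j. if j = i then 1 else 0}"], rule exI[of _ "\<lambda>_. 1"])
     (auto simp: prod_pz intro!: ext)

lemma bdd_norm_compact: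
  fixes L :: "'a::metric_space set" and g :: "'a \<Rightarrow> complex"
  assumes "compact L" "continuous_on L g"
  shows "bdd_above ((\<lambda>x. norm (g x)) ` L)"
proof -
  have "compact ((\<lambda>x. norm (g x)) ` L)"
    by (intro compact_continuous_image continuous_on_norm assms)
  then show ?thesis by (simp add: bounded_imp_bdd_above compact_imp_bounded)
qed

lemma near_lemma:
  fixes L :: "(complex^'n) set"
  assumes L: "L \<in> nonempty_compacts" and p: "cpoly p" and q: "cpoly q"
    and qL: "\<forall>x\<in>L. q x \<noteq> 0" and eta: "\<eta> > 0"
  shows "\<exists>\<epsilon>>0. \<forall>L'\<in>nonempty_compacts. hausdorff_dist L L' < \<epsilon> \<longrightarrow>
     (\<forall>x\<in>L'. q x \<noteq> 0) \<and> (SUP x\<in>L'. norm (p x / q x)) \<le> (SUP x\<in>L. norm (p x / q x)) + \<eta>"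
proof -
  have cL: "compact L" "L \<noteq> {}" using L by (auto simp: nonempty_compacts_def)
  have Z: "closed {x. q x = 0}"
    by (rule closed_Collect_eq) (auto intro: cpoly_cont q)
  obtain d where d: "d > 0" "\<forall>x\<in>L. \<forall>y\<in>{x. q x = 0}. d \<le> dist x y"
    using separate_compact_closed[OF cL(1) Z] qL by auto
  define N where "N = {x. infdist x L \<le> d/2}"
  have cN: "compact N" unfolding N_def using compact_infdist_le[OF cL(2) cL(1), of "d/2"] d by simp
  have LN: "L \<subseteq> N" using d by (auto simp: N_def)
  have qN: "\<forall>y\<in>N. q y \<noteq> 0"
  proof
    fix y assume "y \<in> N"
    then have "infdist y L \<le> d/2" by (simp add: N_def)
    obtain x where x: "x \<in> L" "infdist y L = dist y x"
      using infdist_attains_inf[of L y] cL by (auto simp: compact_imp_closed)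
    show "q y \<noteq> 0"
    proof
      assume "q y = 0"
      then have "d \<le> dist x y" using d x by auto
      then show False using x \<open>infdist y L \<le> d/2\<close> d by (simp add: dist_commute)
    qed
  qed
  have gc: "continuous_on N (\<lambda>x. p x / q x)"
    by (intro continuous_on_divide continuous_on_subset[OF cpoly_cont] p q qN) auto
  then have "uniformly_continuous_on N (\<lambda>x. p x / q x)"
    using cN compact_uniformly_continuous by blast
  then obtain \<delta> where \<delta>: "\<delta> > 0"
    "\<forall>x\<in>N. \<forall>x'\<in>N. dist x' x < \<delta> \<longrightarrow> dist (p x' / q x') (p x / q x) < \<eta>"
    using eta unfolding uniformly_continuous_on_def by metis
  have bdd: "bdd_above ((\<lambda>x. norm (p x / q x)) ` L)"
    by (rule bdd_norm_compact[OF cL(1) continuous_on_subset[OF gc LN]])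
  define s where "s = (SUP x\<in>L. norm (p x / q x))"
  show ?thesis
  proof (rule exI[of _ "min \<delta> (d/2)"], intro conjI)
    show "0 < min \<delta> (d/2)" using \<delta> d by simp
    show "\<forall>L'\<in>nonempty_compacts. hausdorff_dist L L' < min \<delta> (d / 2) \<longrightarrow>
       (\<forall>x\<in>L'. q x \<noteq> 0) \<and> (SUP x\<in>L'. norm (p x / q x)) \<le> (SUP x\<in>L. norm (p x / q x)) + \<eta>"
    proof (intro ballI impI)
    fix L' assume L': "L' \<in> nonempty_compacts" "hausdorff_dist L L' < min \<delta> (d/2)"
    have close: "\<exists>x\<in>L. dist y x < min \<delta> (d/2) \<and> y \<in> N" if "y \<in> L'" for y
    proof -
      have "infdist y L < min \<delta> (d/2)" using L' that hd_less_iff[OF L L'(1)] by blast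
      moreover obtain x where x: "x \<in> L" "infdist y L = dist y x"
        using infdist_attains_inf[of L y] cL by (auto simp: compact_imp_closed)
      ultimately show ?thesis by (auto simp: N_def)
    qed
    have A: "\<forall>x\<in>L'. q x \<noteq> 0" using close qN by blast
    have L'ne: "L' \<noteq> {}" using L' by (auto simp: nonempty_compacts_def)
    have B: "(SUP x\<in>L'. norm (p x / q x)) \<le> (SUP x\<in>L. norm (p x / q x)) + \<eta>"
      unfolding s_def[symmetric]
    proof (rule cSUP_least[OF L'ne])
      fix y assume "y \<in> L'"
      then obtain x where x: "x \<in> L" "dist y x < \<delta>" "y \<in> N" using close by force
      have "dist (p y / q y) (p x / q x) < \<eta>" using \<delta> x LN by auto
      moreover have "norm (p x / q x) \<le> s" unfolding s_def by (rule cSUP_upper[OF x(1) bdd])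
      moreover have "norm (p y / q y) \<le> norm (p x / q x) + dist (p y / q y) (p x / q x)"
        by (metis add.commute dist_commute dist_norm norm_triangle_sub)
      ultimately show "norm (p y / q y) \<le> s + \<eta>" by linarith
    qed
    from A B show "(\<forall>x\<in>L'. q x \<noteq> 0) \<and> (SUP x\<in>L'. norm (p x / q x)) \<le> (SUP x\<in>L. norm (p x / q x)) + \<eta>"
      by blast
  qed
  qed
qed



lemma notin_hull:
  assumes "cpoly p" "cpoly q" "\<forall>x\<in>L'. q x \<noteq> 0"
    "q z = 0 \<or> norm (p z / q z) > (SUP x\<in>L'. norm (p x / q x))"
  shows "z \<notin> R_hull L'"
  using assms unfolding R_hull_def by force

lemma point_lemma:
  fixes L :: "(complex^'n) set"
  assumes L: "L \<in> nonempty_compacts" and z: "z \<notin> R_hull L"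
  shows "\<exists>\<delta>>0. \<exists>\<epsilon>>0. \<forall>L'\<in>nonempty_compacts. hausdorff_dist L L' < \<epsilon> \<longrightarrow>
            (\<forall>z'\<in>ball z \<delta>. z' \<notin> R_hull L')"
proof -
  have cL: "compact L" "L \<noteq> {}" using L by (auto simp: nonempty_compacts_def)
  obtain p q where pq: "cpoly p" "cpoly q" "\<forall>x\<in>L. q x \<noteq> 0"
    and nz: "\<not> (q z \<noteq> 0 \<and> norm (p z / q z) \<le> (SUP x\<in>L. norm (p x / q x)))"
    using z unfolding R_hull_def by blast
  show ?thesis
  proof (cases "q z = 0")
    case False
    define s where "s = (SUP x\<in>L. norm (p x / q x))"
    have gt: "norm (p z / q z) > s" using nz False by (auto simp: s_def)
    define \<eta> where "\<eta> = (norm (p z / q z) - s) / 2"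
    have eta: "\<eta> > 0" using gt by (simp add: \<eta>_def)
    obtain \<epsilon> where \<epsilon>: "\<epsilon> > 0" "\<forall>L'\<in>nonempty_compacts. hausdorff_dist L L' < \<epsilon> \<longrightarrow>
       (\<forall>x\<in>L'. q x \<noteq> 0) \<and> (SUP x\<in>L'. norm (p x / q x)) \<le> s + \<eta>"
      using near_lemma[OF L pq eta] unfolding s_def by blast
    have "isCont (\<lambda>x. p x / q x) z"
      using False by (intro isCont_divide cpoly_isCont pq)
    then obtain \<delta> where \<delta>: "\<delta> > 0" "\<forall>x'. dist x' z < \<delta> \<longrightarrow> dist (p x' / q x') (p z / q z) < \<eta>"
      using eta unfolding continuous_at_eps_delta by metis
    show ?thesis
    proof -
    have "\<forall>L'\<in>nonempty_compacts. hausdorff_dist L L' < \<epsilon> \<longrightarrow> (\<forall>z'\<in>ball z \<delta>. z' \<notin> R_hull L')"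
    proof (intro ballI impI)
      fix L' z' assume L': "L' \<in> nonempty_compacts" "hausdorff_dist L L' < \<epsilon>" and z': "z' \<in> ball z \<delta>"
      have "dist (p z' / q z') (p z / q z) < \<eta>" using \<delta> z' by (auto simp: dist_commute)
      moreover have "norm (p z / q z) \<le> norm (p z' / q z') + dist (p z' / q z') (p z / q z)"
        using norm_triangle_sub[of "p z / q z" "p z' / q z'"] by (simp add: dist_norm norm_minus_commute)
      moreover have e2: "2 * \<eta> = norm (p z / q z) - s" by (simp add: \<eta>_def)
      ultimately have "norm (p z' / q z') > s + \<eta>" by linarith
      then show "z' \<notin> R_hull L'"
        using \<epsilon> L' by (intro notin_hull[OF pq(1,2)]) force+
    qed
    then show ?thesis using \<delta>(1) \<epsilon>(1) by blast
    qed
  next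
    case True
    define s where "s = (SUP x\<in>L. norm (1 / q x))"
    define t where "t = max s 0 + 1"
    have t: "t > 0" by (simp add: t_def)
    have p1: "cpoly (\<lambda>_::complex^'n. 1)" by (rule cpoly_const)
    obtain \<epsilon> where \<epsilon>: "\<epsilon> > 0" "\<forall>L'\<in>nonempty_compacts. hausdorff_dist L L' < \<epsilon> \<longrightarrow>
       (\<forall>x\<in>L'. q x \<noteq> 0) \<and> (SUP x\<in>L'. norm (1 / q x)) \<le> s + 1"
      using near_lemma[OF L p1 pq(2,3), of 1] unfolding s_def by auto
    have "isCont q z" by (rule cpoly_isCont[OF pq(2)])
    then obtain \<delta> where \<delta>: "\<delta> > 0" "\<forall>x'. dist x' z < \<delta> \<longrightarrow> dist (q x') (q z) < 1/t"
      using t unfolding continuous_at_eps_delta by (metis divide_pos_pos zero_less_one)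
    show ?thesis
    proof -
    have "\<forall>L'\<in>nonempty_compacts. hausdorff_dist L L' < \<epsilon> \<longrightarrow> (\<forall>z'\<in>ball z \<delta>. z' \<notin> R_hull L')"
    proof (intro ballI impI)
      fix L' z' assume L': "L' \<in> nonempty_compacts" "hausdorff_dist L L' < \<epsilon>" and z': "z' \<in> ball z \<delta>"
      have "dist z' z < \<delta>" using z' by (simp add: dist_commute)
      then have "dist (q z') (q z) < 1/t" using \<delta>(2) by blast
      then have nq: "norm (q z') < 1/t" using True by (simp add: dist_norm)
      have "q z' = 0 \<or> norm (1 / q z') > (SUP x\<in>L'. norm (1 / q x))"
      proof (cases "q z' = 0")
        case False
        then have "norm (q z') > 0" by simp
        then have "norm (1 / q z') > t" using nq t
          by (simp add: norm_divide field_simps)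
        moreover have "t \<ge> s + 1" by (simp add: t_def)
        ultimately show ?thesis using \<epsilon> L' by force
      qed simp
      then show "z' \<notin> R_hull L'"
        using \<epsilon> L' by (intro notin_hull[OF p1 pq(2)]) force+
    qed
    then show ?thesis using \<delta>(1) \<epsilon>(1) by blast
    qed
  qed
qed

lemma norm_le_sum_comp: "norm (z::complex^'n) \<le> (\<Sum>i\<in>UNIV. norm (z $ i))"
  by (simp add: norm_vec_def L2_set_le_sum)

lemma hull_bound:
  fixes L :: "(complex^'n) set"
  assumes L: "L \<in> nonempty_compacts"
  shows "\<exists>R. \<exists>\<epsilon>>0. \<forall>L'\<in>nonempty_compacts. hausdorff_dist L L' < \<epsilon> \<longrightarrow> R_hull L' \<subseteq> cball 0 R"
proof -
  have q1: "cpoly (\<lambda>_::complex^'n. 1)" by (rule cpoly_const)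
  have "\<forall>i. \<exists>e>0. \<forall>L'\<in>nonempty_compacts. hausdorff_dist L L' < e \<longrightarrow>
       (SUP x\<in>L'. norm (x $ i / 1)) \<le> (SUP x\<in>L. norm (x $ i / 1)) + 1"
  proof
    fix i
    show "\<exists>e>0. \<forall>L'\<in>nonempty_compacts. hausdorff_dist L L' < e \<longrightarrow>
       (SUP x\<in>L'. norm (x $ i / 1)) \<le> (SUP x\<in>L. norm (x $ i / 1)) + 1"
      using near_lemma[OF L cpoly_comp[of i] q1, of 1] by force
  qed
  then obtain eps where eps: "\<forall>i. eps i > 0 \<and> (\<forall>L'\<in>nonempty_compacts. hausdorff_dist L L' < eps i \<longrightarrow>
       (SUP x\<in>L'. norm (x $ i / 1)) \<le> (SUP x\<in>L. norm (x $ i / 1)) + 1)"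
    by metis
  define b where "b i = (SUP x\<in>L. norm (x $ i / 1)) + 1" for i
  define \<epsilon> where "\<epsilon> = Min (range eps)"
  have epos: "\<epsilon> > 0" unfolding \<epsilon>_def using eps by (simp add: Min_gr_iff)
  have ele: "\<epsilon> \<le> eps i" for i unfolding \<epsilon>_def by simp
  have "\<forall>L'\<in>nonempty_compacts. hausdorff_dist L L' < \<epsilon> \<longrightarrow> R_hull L' \<subseteq> cball 0 (\<Sum>i\<in>UNIV. b i)"
  proof (intro ballI impI subsetI)
    fix L' z assume L': "L' \<in> nonempty_compacts" "hausdorff_dist L L' < \<epsilon>" and z: "z \<in> R_hull L'"
    have "norm (z $ i) \<le> b i" for i
    proof -
      have "norm (z $ i / 1) \<le> (SUP x\<in>L'. norm (x $ i / 1))"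
        using z cpoly_comp[of i] q1 unfolding R_hull_def by force
      also have "\<dots> \<le> b i" using eps L' ele[of i] unfolding b_def by force
      finally show ?thesis by simp
    qed
    then have "norm z \<le> (\<Sum>i\<in>UNIV. b i)"
      using norm_le_sum_comp[of z] sum_mono[of UNIV "\<lambda>i. norm (z $ i)" b] by force
    then show "z \<in> cball 0 (\<Sum>i\<in>UNIV. b i)" by simp
  qed
  then show ?thesis using epos by blast
qed

lemma hull_usc:
  fixes L :: "(complex^'n) set"
  assumes L: "L \<in> nonempty_compacts" and U: "open U" and sub: "R_hull L \<subseteq> U"
  shows "\<exists>\<epsilon>>0. \<forall>L'\<in>nonempty_compacts. hausdorff_dist L L' < \<epsilon> \<longrightarrow> R_hull L' \<subseteq> U"
proof -
  obtain R \<epsilon>0 where R: "\<epsilon>0 > 0" "\<forall>L'\<in>nonempty_compacts. hausdorff_dist L L' < \<epsilon>0 \<longrightarrow> R_hull L' \<subseteq> cball 0 R"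
    using hull_bound[OF L] by blast
  define Q where "Q = cball (0::complex^'n) R - U"
  have cQ: "compact Q" unfolding Q_def using U by (intro compact_diff) auto
  have "\<forall>z\<in>Q. \<exists>\<delta>>0. \<exists>\<epsilon>>0. \<forall>L'\<in>nonempty_compacts. hausdorff_dist L L' < \<epsilon> \<longrightarrow>
            (\<forall>z'\<in>ball z \<delta>. z' \<notin> R_hull L')"
    using point_lemma[OF L] sub by (auto simp: Q_def)
  then obtain dl el where del: "\<forall>z\<in>Q. dl z > 0 \<and> el z > 0 \<and> (\<forall>L'\<in>nonempty_compacts. hausdorff_dist L L' < el z \<longrightarrow>
            (\<forall>z'\<in>ball z (dl z). z' \<notin> R_hull L'))"
    by metis
  have "Q \<subseteq> (\<Union>z\<in>Q. ball z (dl z))" using del by force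
  then obtain X where X: "X \<subseteq> Q" "finite X" "Q \<subseteq> (\<Union>z\<in>X. ball z (dl z))"
    using compactE_image[OF cQ, of Q "\<lambda>z. ball z (dl z)"] by auto
  define \<epsilon> where "\<epsilon> = Min (insert \<epsilon>0 (el ` X))"
  have epos: "\<epsilon> > 0" unfolding \<epsilon>_def using X R del by (auto simp: Min_gr_iff)
  have e0: "\<epsilon> \<le> \<epsilon>0" unfolding \<epsilon>_def using X by simp
  have e1: "\<epsilon> \<le> el x" if "x \<in> X" for x unfolding \<epsilon>_def using X that by simp
  show ?thesis
  proof (intro exI[of _ \<epsilon>] conjI ballI impI subsetI epos)
    fix L' z' assume L': "L' \<in> nonempty_compacts" "hausdorff_dist L L' < \<epsilon>" and z': "z' \<in> R_hull L'"
    have "z' \<in> cball 0 R" using R L' e0 z' by force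
    show "z' \<in> U"
    proof (rule ccontr)
      assume "z' \<notin> U"
      then have "z' \<in> Q" using \<open>z' \<in> cball 0 R\<close> by (simp add: Q_def)
      then obtain x where x: "x \<in> X" "z' \<in> ball x (dl x)" using X by auto
      have "hausdorff_dist L L' < el x" using e1[OF x(1)] L' by linarith
      then show False using del x X L' z' by blast
    qed
  qed
qed

lemma hd_self:
  fixes L :: "'a::heine_borel set"
  assumes "L \<in> nonempty_compacts"
  shows "hausdorff_dist L L = 0"
  using hd_le_iff[OF assms assms, of 0] hd_nonneg[OF assms assms] by simp

lemma hull_NC:
  fixes L :: "(complex^'n) set"
  assumes L: "L \<in> nonempty_compacts"
  shows "R_hull L \<in> nonempty_compacts"
proof -
  have cL: "compact L" "L \<noteq> {}" using L by (auto simp: nonempty_compacts_def)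
  have "L \<subseteq> R_hull L"
  proof
    fix x assume x: "x \<in> L"
    show "x \<in> R_hull L" unfolding R_hull_def
    proof (intro CollectI allI impI conjI)
      fix p q :: "complex^'n \<Rightarrow> complex" assume pq: "cpoly p \<and> cpoly q \<and> (\<forall>x\<in>L. q x \<noteq> 0)"
      then show "q x \<noteq> 0" using x by blast
      have "continuous_on L (\<lambda>x. p x / q x)"
        using pq by (intro continuous_on_divide continuous_on_subset[OF cpoly_cont]) auto
      then show "norm (p x / q x) \<le> (SUP x\<in>L. norm (p x / q x))"
        by (rule cSUP_upper[OF x bdd_norm_compact[OF cL(1)]])
    qed
  qed
  then have ne: "R_hull L \<noteq> {}" using cL by auto
  obtain R where "R_hull L \<subseteq> cball 0 R"
    using hull_bound[OF L] hd_self[OF L] L by force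
  then have bd: "bounded (R_hull L)" using bounded_cball bounded_subset by blast
  have "open (- R_hull L)"
    unfolding open_contains_ball
  proof
    fix z assume "z \<in> - R_hull L"
    then obtain \<delta> \<epsilon> where "\<delta> > 0" "\<epsilon> > 0" "\<forall>L'\<in>nonempty_compacts. hausdorff_dist L L' < \<epsilon> \<longrightarrow>
            (\<forall>z'\<in>ball z \<delta>. z' \<notin> R_hull L')"
      using point_lemma[OF L] by blast
    then show "\<exists>e>0. ball z e \<subseteq> - R_hull L" using hd_self[OF L] L by force
  qed
  then have "closed (R_hull L)" by (simp add: closed_def)
  then show ?thesis using bd ne by (simp add: nonempty_compacts_def compact_eq_bounded_closed)
qed

lemma hull_preimage_open:
  fixes U :: "(complex^'n) set"
  assumes "open U"
  shows "hausdorff_open {L \<in> nonempty_compacts. R_hull L \<subseteq> U}"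
  unfolding hausdorff_open_def
proof (intro conjI ballI)
  show "{L \<in> nonempty_compacts. R_hull L \<subseteq> U} \<subseteq> nonempty_compacts" by blast
  fix S assume "S \<in> {L \<in> nonempty_compacts. R_hull L \<subseteq> U}"
  then show "\<exists>e>0. \<forall>T\<in>nonempty_compacts. hausdorff_dist S T < e \<longrightarrow> T \<in> {L \<in> nonempty_compacts. R_hull L \<subseteq> U}"
    using hull_usc[OF _ assms] by blast
qed

theorem theorem6p19:
  fixes M :: "'b measure" and K :: "'b \<Rightarrow> (complex ^ 'n) set"
  assumes "K \<in> measurable M hausdorff_borel"
  shows "(\<lambda>\<omega>. R_hull (K \<omega>)) \<in> measurable M hausdorff_borel"
proof -
  have Hsp: "{U. hausdorff_open U} \<subseteq> Pow (nonempty_compacts :: (complex^'n) set set)"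
    by (auto simp: hausdorff_open_def)
  have Ksp: "K \<omega> \<in> nonempty_compacts" if "\<omega> \<in> space M" for \<omega>
    using measurable_space[OF assms that] space_measure_of[OF Hsp] by (simp add: hausdorff_borel_def)
  have fsp: "(\<lambda>\<omega>. R_hull (K \<omega>)) \<in> space M \<rightarrow> nonempty_compacts"
    using Ksp hull_NC by blast
  have f1: "(\<lambda>\<omega>. R_hull (K \<omega>)) \<in> measurable M (sigma nonempty_compacts Gup)"
  proof (rule measurable_measure_of[OF Gup_Pow fsp])
    fix y :: "(complex^'n) set set" assume "y \<in> Gup"
    then obtain U where U: "open U" "y = up U" by (auto simp: Gup_def)
    have eq: "(\<lambda>\<omega>. R_hull (K \<omega>)) -` y \<inter> space M = K -` {L \<in> nonempty_compacts. R_hull L \<subseteq> U} \<inter> space M"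
      using U Ksp hull_NC by (auto simp: up_def)
    have "{L \<in> nonempty_compacts. R_hull L \<subseteq> U} \<in> sets hausdorff_borel"
      unfolding hausdorff_borel_def sets_measure_of[OF Hsp]
      using hull_preimage_open[OF U(1)] by (auto intro: sigma_sets.Basic)
    then show "(\<lambda>\<omega>. R_hull (K \<omega>)) -` y \<inter> space M \<in> sets M"
      unfolding eq by (rule measurable_sets[OF assms])
  qed
  show ?thesis
    unfolding hausdorff_borel_def
  proof (rule measurable_measure_of[OF Hsp fsp])
    fix V :: "(complex^'n) set set" assume "V \<in> {U. hausdorff_open U}"
    then have "V \<in> sets (sigma nonempty_compacts Gup)"
      using SS_open sets_measure_of[OF Gup_Pow] by auto
    then show "(\<lambda>\<omega>. R_hull (K \<omega>)) -` V \<inter> space M \<in> sets M"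
      by (rule measurable_sets[OF f1])
  qed
qed

end
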